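(* Let $\widehat{X}=X+\epsilon X_0$ and $\widehat{Y}=Y+\epsilon Y_0$ be dual matrices such that the dual group generalized inverse of $\widehat{X}$ exists. Then $\widehat{X}\leq_{D}^{\#}\widehat{Y}$ if and only if $X\leq^{\#}Y$, $\quad X^{\#}X_0+RX= X^{\#}Y_0+RY$, $\quad XR+X_0X^{\#}= YR+Y_0X^{\#}$, where $R=-X^{\#}X_0X^{\#}+(X^{\#})^2X_0(I-XX^{\#})+(I-XX^{\#})X_0(X^{\#})^2$.
   Context: Dual matrices have the form $X+\epsilon X_0$ with real square matrices $X,X_0$ and dual unit $\epsilon\neq0$, $\epsilon^2=0$. For a dual matrix $\widehat{X}$ of dual index 1, the dual group generalized inverse $\widehat{X}^{\#}$ is the unique dual matrix $\widehat{Z}$ (if it exists) with $\widehat{X}\widehat{Z}\widehat{X}=\widehat{X}$, $\widehat{Z}\widehat{X}\widehat{Z}=\widehat{Z}$, $\widehat{X}\widehat{Z}=\widehat{Z}\widehat{X}$; when it exists, $\widehat{X}^{\#}=X^{\#}+\epsilon R$ with $R$ as in the claim, where $X^{\#}$ is the group inverse of $X$. The D-group order is defined by $\widehat{X}\leq_{D}^{\#}\widehat{Y}$ iff $\widehat{X}^{\#}\widehat{X}=\widehat{X}^{\#}\widehat{Y}$ and $\widehat{X}\widehat{X}^{\#}=\widehat{Y}\widehat{X}^{\#}$. For real matrices, the group partial order $X\leq^{\#}Y$ means $X^{\#}X=X^{\#}Y$ and $XX^{\#}=YX^{\#}$. *)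

theory Defs
  imports "HOL-Analysis.Analysis"
begin

text \<open>Dual matrices X + eps X0 (n x n real) represented as pairs (X, X0).\<close>
type_synonym 'n dmat = "(real^'n^'n) \<times> (real^'n^'n)"

definition dmult :: "'n::finite dmat \<Rightarrow> 'n dmat \<Rightarrow> 'n dmat" (infixl "**\<^sub>D" 70) where
  "dmult A B = (fst A ** fst B, fst A ** snd B + snd A ** fst B)"

definition is_group_inverse :: "real^'n^'n \<Rightarrow> real^'n^'n \<Rightarrow> bool" where
  "is_group_inverse X Z \<longleftrightarrow> X ** Z ** X = X \<and> Z ** X ** Z = Z \<and> X ** Z = Z ** X"

definition group_inv :: "real^'n^'n \<Rightarrow> real^'n^'n" where
  "group_inv X = (THE Z. is_group_inverse X Z)"

definition group_le :: "real^'n^'n \<Rightarrow> real^'n^'n \<Rightarrow> bool" where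
  "group_le X Y \<longleftrightarrow> group_inv X ** X = group_inv X ** Y \<and> X ** group_inv X = Y ** group_inv X"

definition is_dual_group_inverse :: "'n::finite dmat \<Rightarrow> 'n dmat \<Rightarrow> bool" where
  "is_dual_group_inverse X Z \<longleftrightarrow>
     X **\<^sub>D Z **\<^sub>D X = X \<and> Z **\<^sub>D X **\<^sub>D Z = Z \<and> X **\<^sub>D Z = Z **\<^sub>D X"

definition dual_group_inv :: "'n::finite dmat \<Rightarrow> 'n dmat" where
  "dual_group_inv X = (THE Z. is_dual_group_inverse X Z)"

definition dgroup_le :: "'n::finite dmat \<Rightarrow> 'n dmat \<Rightarrow> bool" where
  "dgroup_le X Y \<longleftrightarrow>
     dual_group_inv X **\<^sub>D X = dual_group_inv X **\<^sub>D Y \<and>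
     X **\<^sub>D dual_group_inv X = Y **\<^sub>D dual_group_inv X"

end

theory Submission imports Defs begin
lemma mm_radd: "((A::real^'n^'m) + B) ** (C::real^'k^'n) = A ** C + B ** C"
  by (simp add: matrix_matrix_mult_def vec_eq_iff sum.distrib distrib_right)
lemma mm_lsub: "(A::real^'n^'m) ** ((B::real^'k^'n) - C) = A ** B - A ** C"
  by (simp add: matrix_matrix_mult_def vec_eq_iff sum_subtractf right_diff_distrib)
lemma mm_rsub: "((A::real^'n^'m) - B) ** (C::real^'k^'n) = A ** C - B ** C"
  by (simp add: matrix_matrix_mult_def vec_eq_iff sum_subtractf left_diff_distrib)
lemma mm_lneg: "(- (A::real^'n^'m)) ** (C::real^'k^'n) = - (A ** C)"
  by (simp add: matrix_matrix_mult_def vec_eq_iff sum_negf)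
lemma mm_rneg: "(A::real^'n^'m) ** (- (C::real^'k^'n)) = - (A ** C)"
  by (simp add: matrix_matrix_mult_def vec_eq_iff sum_negf)

lemma uniq_gen:
  assumes assoc: "\<And>a b c. f a (f b c) = f (f a b) c"
  and z: "f (f x z) x = x" "f (f z x) z = z" "f x z = f z x"
  and w: "f (f x w) x = x" "f (f w x) w = w" "f x w = f w x"
  shows "z = w"
proof -
  have FE: "f (f x z) (f x w) = f x w"
    using z(1) by (simp only: assoc)
  have EF: "f (f z x) (f w x) = f z x"
  proof -
    have "f (f z x) (f w x) = f z (f (f x w) x)" by (simp only: assoc)
    then show ?thesis using w(1) by simp
  qed
  have E: "f x z = f x w" using EF FE z(3) w(3) by simp
  have "z = f (f x z) z" using z(2) z(3) by simp
  also have "\<dots> = f (f w x) z" using E w(3) by simp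
  also have "\<dots> = f w (f x z)" by (simp only: assoc)
  also have "\<dots> = f w (f x w)" using E by simp
  also have "\<dots> = w" using w(2) by (simp only: assoc)
  finally show ?thesis .
qed

lemma dassoc: "dmult a (dmult b c) = dmult (dmult a b) c"
  by (simp add: dmult_def matrix_mul_assoc matrix_add_ldistrib mm_radd add.assoc)

lemma core:
  fixes X G X0 Z0 :: "real^'n^'n"
  assumes g1: "X ** G ** X = X" and g2: "G ** X ** G = G" and g3: "X ** G = G ** X"
  and E2: "G ** X ** Z0 + (G ** X0 + Z0 ** X) ** G = Z0"
  and E3: "X ** Z0 + X0 ** G = G ** X0 + Z0 ** X"
  shows "Z0 = - (G ** X0 ** G) + (G ** G) ** X0 ** (mat 1 - X ** G)
                + (mat 1 - X ** G) ** X0 ** (G ** G)"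
proof -
  have gx: "G ** X = X ** G" using g3 by simp
  have gxw: "G ** (X ** W) = X ** (G ** W)" for W by (simp add: matrix_mul_assoc gx)
  have xxg: "X ** (X ** G) = X" by (metis g1 gx matrix_mul_assoc)
  have xxgw: "X ** (X ** (G ** W)) = X ** W" for W
    by (metis xxg matrix_mul_assoc)
  have xgg: "X ** (G ** G) = G" by (metis g2 gx matrix_mul_assoc)
  have xggw: "X ** (G ** (G ** W)) = G ** W" for W
    by (metis xgg matrix_mul_assoc)
  note N = matrix_mul_assoc[symmetric] matrix_add_ldistrib mm_radd mm_lsub mm_rsub mm_lneg mm_rneg
    gx gxw xxg xxgw xgg xggw
  have b0: "X ** G ** (G ** X ** Z0 + (G ** X0 + Z0 ** X) ** G) = X ** G ** Z0"
    using E2 by simp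
  have b: "X ** G ** Z0 ** X ** G = - (G ** X0 ** G)"
    using b0 by (simp add: N eq_neg_iff_add_eq_0 add.commute)
  have e1: "G ** Z0 ** X = G ** (X ** G ** Z0 ** X ** G) ** X" by (simp add: N)
  also have "\<dots> = G ** (- (G ** X0 ** G)) ** X" by (simp only: b)
  finally have e1': "G ** (Z0 ** X) = - (G ** (G ** (X0 ** (X ** G))))" by (simp add: N)
  have e2: "X ** Z0 ** G = X ** (X ** G ** Z0 ** X ** G) ** G" by (simp add: N)
  also have "\<dots> = X ** (- (G ** X0 ** G)) ** G" by (simp only: b)
  finally have e2': "X ** (Z0 ** G) = - (X ** (G ** (X0 ** (G ** G))))" by (simp add: N)
  have c0: "G ** (X ** Z0 + X0 ** G) = G ** (G ** X0 + Z0 ** X)" using E3 by simp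
  have c: "X ** (G ** Z0) = G ** (G ** X0) - G ** (X0 ** G) - G ** (G ** (X0 ** (X ** G)))"
    using c0 by (simp add: N e1' algebra_simps)
  have d0: "(X ** Z0 + X0 ** G) ** G = (G ** X0 + Z0 ** X) ** G" using E3 by simp
  have d: "Z0 ** (X ** G) = X0 ** (G ** G) - G ** (X0 ** G) - X ** (G ** (X0 ** (G ** G)))"
    using d0 by (simp add: N e2' algebra_simps)
  have E2': "Z0 = X ** (G ** Z0) + G ** (X0 ** G) + Z0 ** (X ** G)"
    using E2 by (simp add: N add.assoc)
  show ?thesis
    apply (subst E2')
    apply (simp only: c d)
    apply (simp add: N algebra_simps)
    done
qed

theorem mainTheorem12:
  fixes X X0 Y Y0 :: "real^'n^'n"
  assumes "\<exists>Z. is_dual_group_inverse (X, X0) Z"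
  defines "Xg \<equiv> group_inv X"
  defines "R \<equiv> - (Xg ** X0 ** Xg) + (Xg ** Xg) ** X0 ** (mat 1 - X ** Xg)
                + (mat 1 - X ** Xg) ** X0 ** (Xg ** Xg)"
  shows "dgroup_le (X, X0) (Y, Y0) \<longleftrightarrow>
           group_le X Y \<and>
           Xg ** X0 + R ** X = Xg ** Y0 + R ** Y \<and>
           X ** R + X0 ** Xg = Y ** R + Y0 ** Xg"
proof -
  obtain G Z0 where Z: "is_dual_group_inverse (X, X0) (G, Z0)"
    using assms(1) by auto
  have eqs: "X ** G ** X = X" "G ** X ** G = G" "X ** G = G ** X"
    "G ** X ** Z0 + (G ** X0 + Z0 ** X) ** G = Z0"
    "X ** Z0 + X0 ** G = G ** X0 + Z0 ** X"
    using Z unfolding is_dual_group_inverse_def dmult_def fst_conv snd_conv prod.inject by blast+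
  have gi: "is_group_inverse X G" using eqs by (simp add: is_group_inverse_def)
  have Guniq: "group_inv X = G"
    unfolding group_inv_def
  proof (rule the_equality)
    show "is_group_inverse X G" by (rule gi)
    fix W assume "is_group_inverse X W"
    have a: "\<And>a b c::real^'n^'n. a ** (b ** c) = a ** b ** c" by (simp add: matrix_mul_assoc)
    from \<open>is_group_inverse X W\<close> gi show "W = G" unfolding is_group_inverse_def
      using uniq_gen[where f="(**)" and x=X and z=W and w=G, OF a] by blast
  qed
  have Duniq: "dual_group_inv (X, X0) = (G, Z0)"
    unfolding dual_group_inv_def
  proof (rule the_equality)
    show "is_dual_group_inverse (X, X0) (G, Z0)" by (rule Z)
    fix W assume "is_dual_group_inverse (X, X0) W"
    from \<open>is_dual_group_inverse (X, X0) W\<close> Z show "W = (G, Z0)" unfolding is_dual_group_inverse_def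
      using uniq_gen[where f="dmult" and x="(X, X0)" and z=W and w="(G, Z0)", OF dassoc] by blast
  qed
  have RZ: "R = Z0" unfolding R_def Xg_def Guniq
    using core[OF eqs] by simp
  show ?thesis
    unfolding dgroup_le_def group_le_def Duniq RZ Xg_def Guniq
    by (auto simp: dmult_def)
qed

end
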